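(* Let $G$ be a graph and let $P=\langle p_1,\dots,p_m\rangle$ and $Q=\langle q_1,\dots,q_n\rangle$ be vertex-disjoint induced paths in $G$ such that $\mathrm{tw}\big(G[V(P)\cup V(Q)]\cup\{p_1q_1,p_mq_n\}\big)\le 2$. Then for every $i,j$ with $p_iq_j\in E(G)$, the set $\{p_i,q_j\}$ separates $\{p_1,\dots,p_{i-1}\}\cup\{q_1,\dots,q_{j-1}\}$ from $\{p_{i+1},\dots,p_m\}\cup\{q_{j+1},\dots,q_n\}$ in $G[V(P)\cup V(Q)]$.
   Context: $\mathrm{tw}$ is treewidth. A path is induced if it is an induced subgraph. For a graph $F$ and a set of vertex pairs $E'$, $F\cup E'$ is $F$ with these pairs added as edges. A set $S$ separates $A$ from $B$ (disjoint from $S$) if no path in the graph minus $S$ joins a vertex of $A$ to a vertex of $B$. *)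

theory Defs
  imports Main
begin

definition sgraph :: "'a set \<Rightarrow> 'a set set \<Rightarrow> bool" where
  "sgraph V E \<longleftrightarrow> finite V \<and>
     (\<forall>e\<in>E. \<exists>u v. e = {u, v} \<and> u \<noteq> v \<and> u \<in> V \<and> v \<in> V)"

definition walk :: "'a set set \<Rightarrow> 'a list \<Rightarrow> bool" where
  "walk E xs \<longleftrightarrow> xs \<noteq> [] \<and> (\<forall>i. Suc i < length xs \<longrightarrow> {xs ! i, xs ! Suc i} \<in> E)"

definition connected_graph :: "'a set \<Rightarrow> 'a set set \<Rightarrow> bool" where
  "connected_graph V E \<longleftrightarrow>
     (\<forall>u\<in>V. \<forall>v\<in>V. \<exists>xs. walk E xs \<and> set xs \<subseteq> V \<and> hd xs = u \<and> last xs = v)"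

definition induced_edges :: "'a set set \<Rightarrow> 'a set \<Rightarrow> 'a set set" where
  "induced_edges E X = {e \<in> E. e \<subseteq> X}"

definition is_tree :: "'a set \<Rightarrow> 'a set set \<Rightarrow> bool" where
  "is_tree I F \<longleftrightarrow> I \<noteq> {} \<and> sgraph I F \<and> connected_graph I F \<and>
     (\<forall>e\<in>F. \<not> connected_graph I (F - {e}))"

definition tree_decomposition ::
  "'a set \<Rightarrow> 'a set set \<Rightarrow> nat set \<Rightarrow> nat set set \<Rightarrow> (nat \<Rightarrow> 'a set) \<Rightarrow> bool" where
  "tree_decomposition V E I F B \<longleftrightarrow>
     is_tree I F \<and>
     (\<forall>t\<in>I. B t \<subseteq> V) \<and>
     (\<forall>v\<in>V. \<exists>t\<in>I. v \<in> B t) \<and>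
     (\<forall>e\<in>E. \<exists>t\<in>I. e \<subseteq> B t) \<and>
     (\<forall>v\<in>V. connected_graph {t\<in>I. v \<in> B t} (induced_edges F {t\<in>I. v \<in> B t}))"

definition treewidth :: "'a set \<Rightarrow> 'a set set \<Rightarrow> nat" where
  "treewidth V E = (LEAST k. \<exists>I F B. tree_decomposition V E I F B \<and> (\<forall>t\<in>I. card (B t) \<le> k + 1))"

definition induced_path :: "'a set \<Rightarrow> 'a set set \<Rightarrow> 'a list \<Rightarrow> bool" where
  "induced_path V E ps \<longleftrightarrow> ps \<noteq> [] \<and> distinct ps \<and> set ps \<subseteq> V \<and>
     (\<forall>i<length ps. \<forall>j<length ps. {ps ! i, ps ! j} \<in> E \<longleftrightarrow> (i = Suc j \<or> j = Suc i))"

definition separates :: "'a set \<Rightarrow> 'a set set \<Rightarrow> 'a set \<Rightarrow> 'a set \<Rightarrow> 'a set \<Rightarrow> bool" where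
  "separates V E S A B \<longleftrightarrow> A \<inter> S = {} \<and> B \<inter> S = {} \<and>
     \<not> (\<exists>xs. walk E xs \<and> set xs \<subseteq> V - S \<and> hd xs \<in> A \<and> last xs \<in> B)"

end

theory Submission
  imports Defs
begin


abbreviation E2 where "E2 E \<equiv> (\<lambda>a b. {a,b} \<in> E)"

lemma walk_succ: "walk E xs \<longleftrightarrow> xs \<noteq> [] \<and> successively (E2 E) xs"
  unfolding walk_def successively_conv_nth by simp

lemma walk_single[simp]: "walk E [x]"
  by (simp add: walk_succ)

lemma walk_Cons2: "walk E (x # y # zs) \<longleftrightarrow> {x,y} \<in> E \<and> walk E (y # zs)"
  by (simp add: walk_succ)

lemma walk_append: "walk E (xs @ ys) \<longleftrightarrow>
   (xs = [] \<and> walk E ys) \<or> (ys = [] \<and> walk E xs) \<or> (walk E xs \<and> walk E ys \<and> {last xs, hd ys} \<in> E)"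
  by (auto simp: walk_succ successively_append_iff)

lemma walk_rev: "walk E (rev xs) \<longleftrightarrow> walk E xs"
  by (simp add: walk_succ insert_commute)

lemma walk_mono: assumes "walk E xs" "\<And>a b. a \<in> set xs \<Longrightarrow> b \<in> set xs \<Longrightarrow> {a,b} \<in> E \<Longrightarrow> {a,b} \<in> E'" shows "walk E' xs"
  using assms(1) successively_mono[of "E2 E" xs "E2 E'", OF _ assms(2)] unfolding walk_succ by blast

lemma walk_sub: "walk E xs \<Longrightarrow> E \<subseteq> E' \<Longrightarrow> walk E' xs"
  using walk_mono by blast

lemma walk_join: "walk E xs \<Longrightarrow> walk E ys \<Longrightarrow> last xs = hd ys \<Longrightarrow>
   walk E (xs @ tl ys) \<and> hd (xs @ tl ys) = hd xs \<and> last (xs @ tl ys) = last ys \<and> set (xs @ tl ys) \<subseteq> set xs \<union> set ys"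
proof -
  assume a: "walk E xs" "walk E ys" "last xs = hd ys"
  then obtain y ys' where ys: "ys = y # ys'" by (cases ys) (auto simp: walk_def)
  have "xs \<noteq> []" using a by (auto simp: walk_def)
  show ?thesis
  proof (cases ys')
    case Nil then show ?thesis using a ys \<open>xs \<noteq> []\<close> by auto
  next
    case (Cons z zs)
    then show ?thesis using a ys \<open>xs \<noteq> []\<close> by (auto simp: walk_append walk_Cons2)
  qed
qed

lemma walk_cross: "walk E xs \<Longrightarrow> set xs \<subseteq> X \<union> Y \<Longrightarrow> hd xs \<in> X \<Longrightarrow> last xs \<in> Y \<Longrightarrow> X \<inter> Y = {} \<Longrightarrow>
   \<exists>a\<in>X. \<exists>b\<in>Y. {a,b} \<in> E"
proof (induction xs)
  case Nil then show ?case by (simp add: walk_def)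
next
  case (Cons x xs)
  show ?case
  proof (cases xs)
    case Nil then show ?thesis using Cons.prems by auto
  next
    case (Cons y ys)
    then have e: "{x,y} \<in> E" and w: "walk E xs" using Cons.prems by (auto simp: walk_Cons2)
    show ?thesis
    proof (cases "y \<in> Y")
      case True then show ?thesis using e Cons.prems by auto
    next
      case False then have "y \<in> X" using Cons.prems \<open>xs = y # ys\<close> by auto
      then show ?thesis using Cons.IH w Cons.prems \<open>xs = y # ys\<close> by auto
    qed
  qed
qed

definition conn where "conn F S \<longleftrightarrow> connected_graph S (induced_edges F S)"

lemma conn_union: assumes "conn F S" "conn F T" "S \<inter> T \<noteq> {}" shows "conn F (S \<union> T)"
proof -
  have lift: "\<exists>xs. walk (induced_edges F (S \<union> T)) xs \<and> set xs \<subseteq> S \<union> T \<and> hd xs = u \<and> last xs = v"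
    if uv: "u \<in> U" "v \<in> U" and cU: "conn F U" and sub: "U \<subseteq> S \<union> T" for u v U
  proof -
    have "connected_graph U (induced_edges F U)" using cU by (simp add: conn_def)
    then obtain xs where xs: "walk (induced_edges F U) xs" "set xs \<subseteq> U" "hd xs = u" "last xs = v"
      using uv unfolding connected_graph_def by blast
    have "induced_edges F U \<subseteq> induced_edges F (S \<union> T)" using sub by (auto simp: induced_edges_def)
    then show ?thesis using walk_sub xs sub by blast
  qed
  obtain w where w: "w \<in> S" "w \<in> T" using assms(3) by blast
  show ?thesis unfolding conn_def connected_graph_def
  proof (intro ballI)
    fix u v assume uv: "u \<in> S \<union> T" "v \<in> S \<union> T"
    obtain xs where xs: "walk (induced_edges F (S \<union> T)) xs" "set xs \<subseteq> S \<union> T" "hd xs = u" "last xs = w"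
      using uv(1) w lift[of u S w] lift[of u T w] assms by blast
    obtain ys where ys: "walk (induced_edges F (S \<union> T)) ys" "set ys \<subseteq> S \<union> T" "hd ys = w" "last ys = v"
      using uv(2) w lift[of w S v] lift[of w T v] assms by blast
    show "\<exists>zs. walk (induced_edges F (S \<union> T)) zs \<and> set zs \<subseteq> S \<union> T \<and> hd zs = u \<and> last zs = v"
      using walk_join[OF xs(1) ys(1)] xs ys by (intro exI[of _ "xs @ tl ys"]) auto
  qed
qed



lemma sg_edge: "sgraph I F \<Longrightarrow> {x,y} \<in> F \<Longrightarrow> x \<noteq> y \<and> x \<in> I \<and> y \<in> I"
  unfolding sgraph_def by (metis doubleton_eq_iff)

lemma shortcut:
  assumes "\<forall>e\<in>E. l \<in> e \<longrightarrow> e = {l,u}" "u \<noteq> l"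
  shows "walk E xs \<Longrightarrow> hd xs \<noteq> l \<Longrightarrow> last xs \<noteq> l \<Longrightarrow>
    \<exists>ys. walk E ys \<and> set ys \<subseteq> set xs - {l} \<and> hd ys = hd xs \<and> last ys = last xs"
proof (induction "length xs" arbitrary: xs rule: less_induct)
  case less
  show ?case
  proof (cases "l \<in> set xs")
    case False then show ?thesis using less.prems by (intro exI[of _ xs]) auto
  next
    case True
    then obtain as bs where xs: "xs = as @ l # bs" by (meson split_list)
    have asne: "as \<noteq> []" using less.prems xs by auto
    have bsne: "bs \<noteq> []" using less.prems xs by auto
    then obtain b bs' where bs: "bs = b # bs'" by (cases bs) auto
    have wa: "walk E as" and wl: "walk E (l # bs)" and ea: "{last as, l} \<in> E"
      using less.prems(1) asne unfolding xs by (auto simp: walk_append)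
    have "{last as, l} = {l,u}" using ea assms(1) by auto
    then have lu: "last as = u" using assms(2) by (auto simp: doubleton_eq_iff)
    have "{l, b} \<in> E" using wl bs by (simp add: walk_Cons2)
    then have "{l,b} = {l,u}" using assms(1) by auto
    then have bu: "b = u" using assms(2) by (auto simp: doubleton_eq_iff)
    define zs where "zs = as @ bs'"
    have wz: "walk E zs"
    proof (cases bs')
      case Nil then show ?thesis using wa zs_def by simp
    next
      case (Cons c cs)
      then have "walk E (u # c # cs)" using wl bs bu by (simp add: walk_Cons2)
      then show ?thesis using wa lu Cons zs_def by (auto simp: walk_append walk_Cons2)
    qed
    have len: "length zs < length xs" using xs bs zs_def by simp
    have hz: "hd zs = hd xs" using xs zs_def asne by simp
    have lz: "last zs = last xs" using xs zs_def asne bs bu lu by (cases bs') auto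
    have sz: "set zs \<subseteq> set xs" using xs bs zs_def by auto
    obtain ys where "walk E ys" "set ys \<subseteq> set zs - {l}" "hd ys = hd zs" "last ys = last zs"
      using less.hyps[OF len wz] less.prems hz lz by auto
    then show ?thesis using hz lz sz by (intro exI[of _ ys]) auto
  qed
qed

lemma reroute:
  assumes "connected_graph I F" "walk (F - {{u,l}}) d" "set d \<subseteq> I" "hd d = u" "last d = l"
  shows "connected_graph I (F - {{u,l}})"
proof -
  have main: "\<exists>ys. walk (F - {{u,l}}) ys \<and> set ys \<subseteq> I \<and> hd ys = hd xs \<and> last ys = last xs"
    if "walk F xs" "set xs \<subseteq> I" for xs
    using that
  proof (induction xs rule: induct_list012)
    case 1 then show ?case by (simp add: walk_def)
  next
    case (2 x) then show ?case by (intro exI[of _ "[x]"]) auto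
  next
    case (3 x y zs)
    obtain ys where ys: "walk (F - {{u,l}}) ys" "set ys \<subseteq> I" "hd ys = y" "last ys = last (y # zs)"
      using 3 by (auto simp: walk_Cons2)
    have exy: "{x,y} \<in> F" using 3 by (simp add: walk_Cons2)
    show ?case
    proof (cases "{x,y} = {u,l}")
      case True
      have "\<exists>d'. walk (F - {{u,l}}) d' \<and> set d' \<subseteq> I \<and> hd d' = x \<and> last d' = y"
      proof (cases "x = u")
        case True then have "y = l" using \<open>{x,y} = {u,l}\<close> by (auto simp: doubleton_eq_iff)
        then show ?thesis using assms True by blast
      next
        case False then have "x = l" "y = u" using \<open>{x,y} = {u,l}\<close> by (auto simp: doubleton_eq_iff)
        moreover have "d \<noteq> []" using assms(2) by (simp add: walk_def)
        ultimately show ?thesis using assms by (intro exI[of _ "rev d"]) (auto simp: walk_rev hd_rev last_rev)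
      qed
      then obtain d' where d': "walk (F - {{u,l}}) d'" "set d' \<subseteq> I" "hd d' = x" "last d' = y" by blast
      show ?thesis using walk_join[OF d'(1) ys(1)] d' ys by (intro exI[of _ "d' @ tl ys"]) auto
    next
      case False
      have "ys \<noteq> []" using ys by (simp add: walk_def)
      then have "walk (F - {{u,l}}) ([x] @ ys)" using ys False exy by (subst walk_append) auto
      then show ?thesis using ys 3 \<open>ys \<noteq> []\<close> by (intro exI[of _ "x # ys"]) auto
    qed
  qed
  show ?thesis unfolding connected_graph_def
  proof (intro ballI)
    fix a b assume "a \<in> I" "b \<in> I"
    then obtain xs where "walk F xs" "set xs \<subseteq> I" "hd xs = a" "last xs = b"
      using assms(1) unfolding connected_graph_def by blast
    then show "\<exists>ys. walk (F - {{u,l}}) ys \<and> set ys \<subseteq> I \<and> hd ys = a \<and> last ys = b"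
      using main by blast
  qed
qed



lemma conn_walk: "connected_graph V E \<Longrightarrow> u \<in> V \<Longrightarrow> v \<in> V \<Longrightarrow>
  \<exists>xs. walk E xs \<and> set xs \<subseteq> V \<and> hd xs = u \<and> last xs = v"
  unfolding connected_graph_def by blast

lemma tree_remove_leaf:
  assumes T: "is_tree I F" and e: "{l,u} \<in> F" and leaf: "\<forall>w. {l,w} \<in> F \<longrightarrow> w = u"
    and c: "card I \<ge> 2"
  shows "is_tree (I - {l}) (F - {{l,u}})"
proof -
  have sg: "sgraph I F" and cg: "connected_graph I F" and br: "\<forall>e\<in>F. \<not> connected_graph I (F - {e})"
    using T by (auto simp: is_tree_def)
  have fin: "finite I" using sg by (simp add: sgraph_def)
  have ul: "u \<noteq> l" "u \<in> I" "l \<in> I" using sg_edge[OF sg e] by auto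
  have lF: "\<forall>e\<in>F. l \<in> e \<longrightarrow> e = {l,u}"
  proof (intro ballI impI)
    fix e assume "e \<in> F" "l \<in> e"
    then obtain a b where "e = {a,b}" using sg unfolding sgraph_def by blast
    then have "l = a \<or> l = b" using \<open>l \<in> e\<close> by auto
    then show "e = {l,u}"
    proof
      assume "l = a" then show ?thesis using leaf \<open>e \<in> F\<close> \<open>e = {a,b}\<close> by auto
    next
      assume "l = b" then have "{l,a} \<in> F" using \<open>e \<in> F\<close> \<open>e = {a,b}\<close> by (simp add: insert_commute)
      then have "a = u" using leaf by blast
      then show ?thesis using \<open>e = {a,b}\<close> \<open>l = b\<close> by auto
    qed
  qed
  let ?I = "I - {l}" and ?F = "F - {{l,u}}"
  have "card ?I = card I - 1" using fin ul by (simp add: card_Diff_singleton)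
  then have "card ?I \<noteq> 0" using c by simp
  then have ne: "?I \<noteq> {}" by (metis card.empty)
  have sg': "sgraph ?I ?F"
    unfolding sgraph_def
  proof (intro conjI ballI)
    show "finite ?I" using fin by simp
    fix e assume "e \<in> ?F"
    then obtain a b where ab: "e = {a,b}" "a \<noteq> b" "a \<in> I" "b \<in> I" using sg unfolding sgraph_def by blast
    have "e \<in> F" "e \<noteq> {l,u}" using \<open>e \<in> ?F\<close> by simp_all
    then have "l \<notin> e" using lF by blast
    then have "a \<in> ?I" "b \<in> ?I" using ab by blast+
    then show "\<exists>a b. e = {a, b} \<and> a \<noteq> b \<and> a \<in> ?I \<and> b \<in> ?I" using ab by blast
  qed
  have avoid: "\<exists>ys. walk ?F ys \<and> set ys \<subseteq> ?I \<and> hd ys = a \<and> last ys = b" if "a \<in> ?I" "b \<in> ?I" for a b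
  proof -
    have "a \<in> I" "b \<in> I" using that by simp_all
    from conn_walk[OF cg this] obtain xs where xs: "walk F xs" "set xs \<subseteq> I" "hd xs = a" "last xs = b"
      by blast
    have "hd xs \<noteq> l" "last xs \<noteq> l" using xs(3,4) that by simp_all
    from shortcut[OF lF ul(1) xs(1) this] obtain ys where ys0: "walk F ys" "set ys \<subseteq> set xs - {l}" "hd ys = hd xs" "last ys = last xs"
      by blast
    have ys: "walk F ys" "set ys \<subseteq> set xs - {l}" "hd ys = a" "last ys = b" using ys0 xs(3,4) by simp_all
    have "walk ?F ys"
    proof (rule walk_mono[OF ys(1)])
      fix a' b' assume "a' \<in> set ys" "b' \<in> set ys" "{a',b'} \<in> F"
      then have "a' \<noteq> l" "b' \<noteq> l" using ys(2) by blast+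
      then have "{a',b'} \<noteq> {l,u}" by (metis insertI1 insertE singletonD)
      then show "{a',b'} \<in> ?F" using \<open>{a',b'} \<in> F\<close> by simp
    qed
    then show ?thesis using ys xs by blast
  qed
  have cg': "connected_graph ?I ?F" unfolding connected_graph_def using avoid by blast
  have br': "\<not> connected_graph ?I (?F - {e})" if "e \<in> ?F" for e
  proof
    assume ce: "connected_graph ?I (?F - {e})"
    have eF: "e \<in> F" "e \<noteq> {l,u}" using that by simp_all
    have fromu: "\<exists>ys. walk (F - {e}) ys \<and> set ys \<subseteq> I \<and> hd ys = u \<and> last ys = v" if "v \<in> I" for v
    proof (cases "v = l")
      case True
      have "{u,l} = {l,u}" by (rule insert_commute)
      then have "{u,l} \<in> F - {e}" using e eF by simp
      then have "walk (F - {e}) [u, l]" by (simp add: walk_Cons2)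
      moreover have "set [u,l] \<subseteq> I" using ul by simp
      ultimately show ?thesis using True by (intro exI[of _ "[u,l]"]) simp
    next
      case False
      have "u \<in> ?I" "v \<in> ?I" using ul that False by simp_all
      from conn_walk[OF ce this] obtain ys where ys: "walk (?F - {e}) ys" "set ys \<subseteq> ?I" "hd ys = u" "last ys = v"
        by blast
      have "?F - {e} \<subseteq> F - {e}" by blast
      then have "walk (F - {e}) ys" using ys(1) by (rule walk_sub[rotated])
      moreover have "set ys \<subseteq> I" using ys(2) by blast
      ultimately show ?thesis using ys(3,4) by blast
    qed
    have "connected_graph I (F - {e})" unfolding connected_graph_def
    proof (intro ballI)
      fix a b assume "a \<in> I" "b \<in> I"
      obtain xs where xs: "walk (F - {e}) xs" "set xs \<subseteq> I" "hd xs = u" "last xs = a"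
        using fromu \<open>a \<in> I\<close> by blast
      obtain ys where ys: "walk (F - {e}) ys" "set ys \<subseteq> I" "hd ys = u" "last ys = b"
        using fromu \<open>b \<in> I\<close> by blast
      have xne: "xs \<noteq> []" using xs by (simp add: walk_def)
      have r: "walk (F - {e}) (rev xs)" "last (rev xs) = hd ys" "hd (rev xs) = a"
        using xs ys xne by (auto simp: walk_rev hd_rev last_rev)
      show "\<exists>zs. walk (F - {e}) zs \<and> set zs \<subseteq> I \<and> hd zs = a \<and> last zs = b"
        using walk_join[OF r(1) ys(1) r(2)] r xs ys by (intro exI[of _ "rev xs @ tl ys"]) auto
    qed
    then show False using br eF by blast
  qed
  show ?thesis unfolding is_tree_def using ne sg' cg' br' by blast
qed



lemma walk_appendD: "walk E (xs @ ys) \<Longrightarrow> (xs \<noteq> [] \<longrightarrow> walk E xs) \<and> (ys \<noteq> [] \<longrightarrow> walk E ys)"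
  by (auto simp: walk_append)

lemma leaf_edges: "sgraph I F \<Longrightarrow> \<forall>w. {l,w} \<in> F \<longrightarrow> w = u \<Longrightarrow> \<forall>e\<in>F. l \<in> e \<longrightarrow> e = {l,u}"
proof (intro ballI impI)
  fix e assume sg: "sgraph I F" and leaf: "\<forall>w. {l,w} \<in> F \<longrightarrow> w = u" and "e \<in> F" "l \<in> e"
  then obtain a b where "e = {a,b}" unfolding sgraph_def by blast
  then have "l = a \<or> l = b" using \<open>l \<in> e\<close> by auto
  then show "e = {l,u}"
  proof
    assume "l = a" then show ?thesis using leaf \<open>e \<in> F\<close> \<open>e = {a,b}\<close> by auto
  next
    assume "l = b" then have "{l,a} \<in> F" using \<open>e \<in> F\<close> \<open>e = {a,b}\<close> by (simp add: insert_commute)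
    then have "a = u" using leaf by blast
    then show ?thesis using \<open>e = {a,b}\<close> \<open>l = b\<close> by auto
  qed
qed

lemma len2: "length xs \<ge> 2 \<Longrightarrow> \<exists>a b cs. xs = a # b # cs"
  by (cases xs rule: remdups_adj.cases) auto

lemma tree_has_leaf:
  assumes T: "is_tree I F" and c: "card I \<ge> 2"
  shows "\<exists>l u. {l,u} \<in> F \<and> (\<forall>w. {l,w} \<in> F \<longrightarrow> w = u)"
proof -
  have sg: "sgraph I F" and cg: "connected_graph I F" and br: "\<forall>e\<in>F. \<not> connected_graph I (F - {e})"
    using T by (auto simp: is_tree_def)
  have fin: "finite I" using sg by (simp add: sgraph_def)
  define P where "P k \<longleftrightarrow> (\<exists>xs. walk F xs \<and> distinct xs \<and> set xs \<subseteq> I \<and> length xs = k)" for k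
  have "I \<noteq> {}" using c by auto
  then obtain a where a: "a \<in> I" by blast
  have "card (I - {a}) = card I - 1" using fin a by (simp add: card_Diff_singleton)
  then have "card (I - {a}) \<noteq> 0" using c by simp
  then have "I - {a} \<noteq> {}" by (metis card.empty)
  then obtain b where b: "b \<in> I" "b \<noteq> a" by blast
  from conn_walk[OF cg a b(1)] obtain xs where xs: "walk F xs" "set xs \<subseteq> I" "hd xs = a" "last xs = b"
    by blast
  obtain x y zs where xyz: "xs = x # y # zs"
  proof (cases xs)
    case Nil then show ?thesis using xs by (simp add: walk_def)
  next
    case (Cons x r)
    show ?thesis
    proof (cases r)
      case Nil then show ?thesis using xs b Cons by simp
    next
      case (Cons y zs) then show ?thesis using that \<open>xs = x # r\<close> by blast
    qed
  qed
  have exy: "{x,y} \<in> F" using xs(1) xyz by (simp add: walk_Cons2)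
  have "x \<noteq> y \<and> x \<in> I \<and> y \<in> I" using sg_edge[OF sg exy] .
  then have P2: "P 2" unfolding P_def using exy
    by (intro exI[of _ "[x,y]"]) (simp add: walk_Cons2)
  have bound: "\<forall>k. P k \<longrightarrow> k \<le> card I"
  proof (intro allI impI)
    fix k assume "P k"
    then obtain ys where ys: "distinct ys" "set ys \<subseteq> I" "length ys = k" unfolding P_def by blast
    have "card (set ys) \<le> card I" using ys(2) fin by (rule card_mono[rotated])
    then show "k \<le> card I" using distinct_card[OF ys(1)] ys(3) by simp
  qed
  obtain k where Pk: "P k" and kmax: "\<forall>k'. P k' \<longrightarrow> k' \<le> k"
    using Nat.ex_has_greatest_nat[OF P2 bound] by blast
  obtain p where p: "walk F p" "distinct p" "set p \<subseteq> I" "length p = k"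
    using Pk unfolding P_def by blast
  have "k \<ge> 2" using kmax P2 by blast
  have "length (rev p) \<ge> 2" using p(4) \<open>k \<ge> 2\<close> by simp
  then obtain l u rs where r1: "rev p = l # u # rs" using len2 by blast
  define as where "as = rev rs"
  have "p = rev (rev p)" by simp
  also have "\<dots> = as @ [u,l]" using r1 as_def by simp
  finally have pe: "p = as @ [u,l]" .
  have "walk F [u,l]" using walk_appendD[of F as "[u,l]"] p(1) pe by simp
  then have eul: "{u,l} \<in> F" by (simp add: walk_Cons2)
  have ulI: "u \<noteq> l" "u \<in> I" "l \<in> I" using sg_edge[OF sg eul] by auto
  have leaf: "\<forall>w. {l,w} \<in> F \<longrightarrow> w = u"
  proof (intro allI impI, rule ccontr)
    fix w assume ew: "{l,w} \<in> F" and wu: "w \<noteq> u"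
    have wl: "w \<noteq> l" "w \<in> I" using sg_edge[OF sg ew] by auto
    show False
    proof (cases "w \<in> set p")
      case False
      have "last p = l" using pe by simp
      then have "walk F (p @ [w])" unfolding walk_append using p(1) ew by simp
      moreover have "distinct (p @ [w])" using p(2) False by simp
      moreover have "set (p @ [w]) \<subseteq> I" using p(3) wl by simp
      ultimately have "P (k+1)" unfolding P_def using p(4) by (intro exI[of _ "p @ [w]"]) simp
      then show False using kmax by fastforce
    next
      case True
      then have "w \<in> set as" using pe wu wl by auto
      then obtain cs ds where as: "as = cs @ w # ds" by (meson split_list)
      define seg where "seg = w # ds @ [u]"
      have pe2: "p = cs @ (seg @ [l])" using pe as seg_def by simp
      have "walk F (seg @ [l])" using walk_appendD[of F cs "seg @ [l]"] p(1) pe2 by simp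
      then have ws: "walk F seg" using walk_appendD[of F seg "[l]"] seg_def by simp
      have lseg: "l \<notin> set seg" using p(2) pe2 by auto
      have wrs: "walk (F - {{u,l}}) (rev seg)"
      proof (rule walk_mono)
        show "walk F (rev seg)" using ws by (simp add: walk_rev)
        fix a' b' assume "a' \<in> set (rev seg)" "b' \<in> set (rev seg)" "{a',b'} \<in> F"
        then have "a' \<noteq> l" "b' \<noteq> l" using lseg by auto
        have "{a',b'} \<noteq> {u,l}"
        proof
          assume "{a',b'} = {u,l}"
          then have "l \<in> {a',b'}" by simp
          then show False using \<open>a' \<noteq> l\<close> \<open>b' \<noteq> l\<close> by simp
        qed
        then show "{a',b'} \<in> F - {{u,l}}" using \<open>{a',b'} \<in> F\<close> by simp
      qed
      have "{w,l} \<noteq> {u,l}" using wu wl by (auto simp: doubleton_eq_iff)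
      moreover have "{w,l} \<in> F" using ew by (simp add: insert_commute)
      ultimately have ewl: "{last (rev seg), l} \<in> F - {{u,l}}" using seg_def by simp
      have wd: "walk (F - {{u,l}}) (rev seg @ [l])" using wrs ewl by (simp add: walk_append)
      have "set (rev seg @ [l]) \<subseteq> I" using p(3) pe2 by auto
      moreover have "hd (rev seg @ [l]) = u" "last (rev seg @ [l]) = l" using seg_def by simp_all
      ultimately have "connected_graph I (F - {{u,l}})" by (rule reroute[OF cg wd])
      then show False using br eul by blast
    qed
  qed
  have "{l,u} \<in> F" by (subst insert_commute) (rule eul)
  then show ?thesis using leaf by blast
qed



lemma helly:
  assumes "is_tree I F" "\<forall>S\<in>SS. S \<subseteq> I \<and> conn F S" "\<forall>S\<in>SS. \<forall>T\<in>SS. S \<inter> T \<noteq> {}"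
  shows "\<exists>t\<in>I. \<forall>S\<in>SS. t \<in> S"
  using assms
proof (induction "card I" arbitrary: I F SS rule: less_induct)
  case less
  have T: "is_tree I F" using less.prems(1) .
  have sg: "sgraph I F" and Ine: "I \<noteq> {}" using T by (auto simp: is_tree_def)
  have fin: "finite I" using sg by (simp add: sgraph_def)
  have Sne: "S \<noteq> {}" if "S \<in> SS" for S using less.prems(3) that by blast
  show ?case
  proof (cases "card I \<ge> 2")
    case False
    have "card I \<noteq> 0" using fin Ine by simp
    then have "card I = 1" using False by simp
    then obtain t where It: "I = {t}" by (auto simp: card_1_singleton_iff)
    have "t \<in> S" if "S \<in> SS" for S
    proof -
      have "S \<subseteq> {t}" using less.prems(2) that It by blast
      then show ?thesis using Sne[OF that] by blast
    qed
    then show ?thesis using It by blast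
  next
    case True
    obtain l u where e: "{l,u} \<in> F" and leaf: "\<forall>w. {l,w} \<in> F \<longrightarrow> w = u"
      using tree_has_leaf[OF T True] by blast
    have ul: "l \<noteq> u" "l \<in> I" "u \<in> I" using sg_edge[OF sg e] by auto
    have lF: "\<forall>e\<in>F. l \<in> e \<longrightarrow> e = {l,u}" using leaf_edges[OF sg leaf] .
    show ?thesis
    proof (cases "\<exists>S0\<in>SS. S0 \<subseteq> {l}")
      case True
      then obtain S0 where S0: "S0 \<in> SS" "S0 \<subseteq> {l}" by blast
      have "l \<in> S" if "S \<in> SS" for S
      proof -
        have "S \<inter> S0 \<noteq> {}" using less.prems(3) that S0(1) by blast
        then show ?thesis using S0(2) by blast
      qed
      then show ?thesis using ul by blast
    next
      case False
      let ?I = "I - {l}" and ?F = "F - {{l,u}}"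
      have other: "\<exists>v\<in>S. v \<noteq> l" if "S \<in> SS" for S using False that by blast
      have uS: "u \<in> S" if S: "S \<in> SS" "l \<in> S" for S
      proof -
        obtain v where v: "v \<in> S" "v \<noteq> l" using other[OF S(1)] by blast
        have cS: "connected_graph S (induced_edges F S)" using less.prems(2) S(1) by (simp add: conn_def)
        from conn_walk[OF cS S(2) v(1)] obtain xs where
          xs: "walk (induced_edges F S) xs" "set xs \<subseteq> S" "hd xs = l" "last xs = v" by blast
        obtain x y zs where xyz: "xs = x # y # zs"
        proof (cases xs)
          case Nil then show ?thesis using xs by (simp add: walk_def)
        next
          case (Cons x r)
          show ?thesis
          proof (cases r)
            case Nil then show ?thesis using xs v Cons by simp
          next
            case (Cons y zs) then show ?thesis using that \<open>xs = x # r\<close> by blast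
          qed
        qed
        have "x = l" using xs(3) xyz by simp
        have "{x,y} \<in> induced_edges F S" using xs(1) xyz by (simp add: walk_Cons2)
        then have "{l,y} \<in> F" "y \<in> S" using \<open>x = l\<close> by (auto simp: induced_edges_def)
        then show "u \<in> S" using leaf by blast
      qed
      have connS: "conn ?F (S - {l})" if S: "S \<in> SS" for S
        unfolding conn_def connected_graph_def
      proof (intro ballI)
        fix a b assume ab: "a \<in> S - {l}" "b \<in> S - {l}"
        have cS: "connected_graph S (induced_edges F S)" using less.prems(2) S by (simp add: conn_def)
        have "a \<in> S" "b \<in> S" using ab by simp_all
        from conn_walk[OF cS this] obtain xs where
          xs: "walk (induced_edges F S) xs" "set xs \<subseteq> S" "hd xs = a" "last xs = b" by blast
        have lFS: "\<forall>e\<in>induced_edges F S. l \<in> e \<longrightarrow> e = {l,u}" using lF by (simp add: induced_edges_def)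
        have "hd xs \<noteq> l" "last xs \<noteq> l" using xs(3,4) ab by simp_all
        from shortcut[OF lFS ul(1)[symmetric] xs(1) this] obtain ys where
          ys: "walk (induced_edges F S) ys" "set ys \<subseteq> set xs - {l}" "hd ys = hd xs" "last ys = last xs"
          by blast
        have "walk (induced_edges ?F (S - {l})) ys"
        proof (rule walk_mono[OF ys(1)])
          fix a' b' assume ab': "a' \<in> set ys" "b' \<in> set ys" "{a',b'} \<in> induced_edges F S"
          then have "a' \<noteq> l" "b' \<noteq> l" "a' \<in> S" "b' \<in> S" using ys(2) xs(2) by blast+
          have ne: "{a',b'} \<noteq> {l,u}"
          proof
            assume "{a',b'} = {l,u}"
            then have "l \<in> {a',b'}" by simp
            then show False using \<open>a' \<noteq> l\<close> \<open>b' \<noteq> l\<close> by simp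
          qed
          have "{a',b'} \<in> F" using ab'(3) by (simp add: induced_edges_def)
          then show "{a',b'} \<in> induced_edges ?F (S - {l})"
            using ne \<open>a' \<noteq> l\<close> \<open>b' \<noteq> l\<close> \<open>a' \<in> S\<close> \<open>b' \<in> S\<close> by (simp add: induced_edges_def)
        qed
        moreover have "set ys \<subseteq> S - {l}" using ys(2) xs(2) by blast
        ultimately show "\<exists>zs. walk (induced_edges ?F (S - {l})) zs \<and> set zs \<subseteq> S - {l} \<and> hd zs = a \<and> last zs = b"
          using ys(3,4) xs(3,4) by metis
      qed
      let ?SS = "(\<lambda>S. S - {l}) ` SS"
      have T': "is_tree ?I ?F" by (rule tree_remove_leaf[OF T e leaf True])
      have cd: "card ?I < card I" using fin ul(2) by (rule card_Diff1_less)
      have p2: "\<forall>S\<in>?SS. S \<subseteq> ?I \<and> conn ?F S" using less.prems(2) connS by blast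
      have p3: "\<forall>S\<in>?SS. \<forall>T\<in>?SS. S \<inter> T \<noteq> {}"
      proof (intro ballI)
        fix S' T' assume "S' \<in> ?SS" "T' \<in> ?SS"
        then obtain S T where ST: "S \<in> SS" "T \<in> SS" "S' = S - {l}" "T' = T - {l}" by blast
        show "S' \<inter> T' \<noteq> {}"
        proof (cases "\<exists>v\<in>S \<inter> T. v \<noteq> l")
          case True then show ?thesis using ST by blast
        next
          case False
          have "S \<inter> T \<noteq> {}" using less.prems(3) ST(1,2) by blast
          then obtain v where v: "v \<in> S \<inter> T" by blast
          then have "v = l" using False by blast
          then have "l \<in> S \<inter> T" using v by simp
          then have "l \<in> S" "l \<in> T" by simp_all
          then have "u \<in> S" "u \<in> T" using uS ST(1,2) by blast+
          then show ?thesis using ST ul(1) by blast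
        qed
      qed
      obtain t where t: "t \<in> ?I" "\<forall>S\<in>?SS. t \<in> S" using less.hyps[OF cd T' p2 p3] by blast
      then show ?thesis by blast
    qed
  qed
qed



lemma conn_single: "connected_graph {t} E"
  unfolding connected_graph_def by (intro ballI exI[of _ "[t]"]) simp

lemma td_conn:
  assumes td: "tree_decomposition V H I F Bg"
  shows "walk H xs \<Longrightarrow> set xs \<subseteq> V \<Longrightarrow> conn F {t\<in>I. Bg t \<inter> set xs \<noteq> {}}"
proof -
  have single: "conn F {t\<in>I. Bg t \<inter> set [x] \<noteq> {}}" if "x \<in> V" for x
  proof -
  have "\<forall>v\<in>V. connected_graph {t\<in>I. v \<in> Bg t} (induced_edges F {t\<in>I. v \<in> Bg t})"
    using td by (simp add: tree_decomposition_def)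
  then have "connected_graph {t\<in>I. x \<in> Bg t} (induced_edges F {t\<in>I. x \<in> Bg t})"
    using that by blast
  moreover have "{t\<in>I. Bg t \<inter> set [x] \<noteq> {}} = {t\<in>I. x \<in> Bg t}" by auto
  ultimately show ?thesis by (simp add: conn_def)
  qed
  show "walk H xs \<Longrightarrow> set xs \<subseteq> V \<Longrightarrow> conn F {t\<in>I. Bg t \<inter> set xs \<noteq> {}}"
  proof (induction xs rule: induct_list012)
  case 1 then show ?case by (simp add: walk_def)
next
  case (2 x) then show ?case using single by simp
next
  case (3 x y zs)
  have w: "walk H (y # zs)" "{x,y} \<in> H" using 3(3) by (simp_all add: walk_Cons2)
  have c1: "conn F {t\<in>I. Bg t \<inter> set [x] \<noteq> {}}" using 3 single by simp
  have c2: "conn F {t\<in>I. Bg t \<inter> set (y # zs) \<noteq> {}}" using 3 w by simp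
  obtain t where t: "t \<in> I" "{x,y} \<subseteq> Bg t" using td w(2) unfolding tree_decomposition_def by blast
  have "{t\<in>I. Bg t \<inter> set [x] \<noteq> {}} \<inter> {t\<in>I. Bg t \<inter> set (y # zs) \<noteq> {}} \<noteq> {}"
    using t by auto
  from conn_union[OF c1 c2 this]
  have "conn F ({t\<in>I. Bg t \<inter> set [x] \<noteq> {}} \<union> {t\<in>I. Bg t \<inter> set (y # zs) \<noteq> {}})" .
  moreover have "{t\<in>I. Bg t \<inter> set [x] \<noteq> {}} \<union> {t\<in>I. Bg t \<inter> set (y # zs) \<noteq> {}} = {t\<in>I. Bg t \<inter> set (x # y # zs) \<noteq> {}}"
    by auto
  ultimately show ?case by simp
qed
qed

lemma td_meet:
  assumes td: "tree_decomposition V H I F Bg" and e: "{x,y} \<in> H" and "x \<in> X" "y \<in> Y"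
  shows "{t\<in>I. Bg t \<inter> X \<noteq> {}} \<inter> {t\<in>I. Bg t \<inter> Y \<noteq> {}} \<noteq> {}"
proof -
  obtain t where t: "t \<in> I" "{x,y} \<subseteq> Bg t" using td e unfolding tree_decomposition_def by blast
  then show ?thesis using assms(3,4) by blast
qed

lemma td_self:
  assumes td: "tree_decomposition V H I F Bg" and "x \<in> X" "x \<in> V"
  shows "{t\<in>I. Bg t \<inter> X \<noteq> {}} \<noteq> {}"
proof -
  obtain t where t: "t \<in> I" "x \<in> Bg t" using td assms(3) unfolding tree_decomposition_def by blast
  then show ?thesis using assms(2) by blast
qed

lemma good_td:
  assumes fin: "finite V" and HV: "\<forall>e\<in>H. e \<subseteq> V" and tw: "treewidth V H \<le> 2"
  shows "\<exists>I F Bg. tree_decomposition V H I F Bg \<and> (\<forall>t\<in>I. card (Bg t) \<le> 3)"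
proof -
  define Q where "Q k \<longleftrightarrow> (\<exists>I F B. tree_decomposition V H I F B \<and> (\<forall>t\<in>I. card (B t) \<le> k + 1))" for k
  have tree: "is_tree {0::nat} {}"
    unfolding is_tree_def sgraph_def by (simp add: conn_single)
  have "tree_decomposition V H {0} {} (\<lambda>_. V)"
    unfolding tree_decomposition_def using tree HV
    by (auto simp: conn_single)
  then have "Q (card V)" unfolding Q_def by (intro exI[of _ "{0}"] exI[of _ "{}"] exI[of _ "\<lambda>_. V"]) auto
  then have "Q (LEAST k. Q k)" by (rule LeastI)
  moreover have "treewidth V H = (LEAST k. Q k)" unfolding treewidth_def Q_def by simp
  ultimately have "Q (treewidth V H)" by simp
  then obtain I F B where "tree_decomposition V H I F B" "\<forall>t\<in>I. card (B t) \<le> treewidth V H + 1"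
    unfolding Q_def by blast
  then show ?thesis using tw by (intro exI[of _ I] exI[of _ F] exI[of _ B]) fastforce
qed



lemma ipath_edge: "induced_path V E ps \<Longrightarrow> Suc k < length ps \<Longrightarrow> {ps ! k, ps ! Suc k} \<in> E"
  unfolding induced_path_def by auto

lemma ipath_walk: "induced_path V E ps \<Longrightarrow> walk E ps"
  unfolding walk_def using ipath_edge by (fastforce simp: induced_path_def)

lemma split_nth: "i < length xs \<Longrightarrow> xs = take i xs @ xs ! i # drop (Suc i) xs"
  by (simp add: id_take_nth_drop)

theorem mainTheorem13:
  fixes V :: "'a set" and E :: "'a set set" and ps qs :: "'a list" and i j :: nat
  assumes "sgraph V E"
    and "induced_path V E ps" and "induced_path V E qs"
    and "set ps \<inter> set qs = {}"
    and "treewidth (set ps \<union> set qs)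
           (induced_edges E (set ps \<union> set qs) \<union> {{hd ps, hd qs}, {last ps, last qs}}) \<le> 2"
    and "i < length ps" and "j < length qs"
    and "{ps ! i, qs ! j} \<in> E"
  shows "separates (set ps \<union> set qs) (induced_edges E (set ps \<union> set qs)) {ps ! i, qs ! j}
           (set (take i ps) \<union> set (take j qs))
           (set (drop (Suc i) ps) \<union> set (drop (Suc j) qs))"
proof -
  define V' where "V' = set ps \<union> set qs"
  define H where "H = induced_edges E V' \<union> {{hd ps, hd qs}, {last ps, last qs}}"
  define A where "A = set (take i ps) \<union> set (take j qs)"
  define B where "B = set (drop (Suc i) ps) \<union> set (drop (Suc j) qs)"
  define p where "p = ps ! i"
  define q where "q = qs ! j"
  have ip: "induced_path V E ps" and iq: "induced_path V E qs" using assms(2,3) .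
  have psne: "ps \<noteq> []" and qsne: "qs \<noteq> []" and dp: "distinct ps" and dq: "distinct qs"
    using ip iq by (simp_all add: induced_path_def)
  have disj: "set ps \<inter> set qs = {}" using assms(4) .
  have sp: "ps = take i ps @ p # drop (Suc i) ps" using split_nth[OF assms(6)] p_def by simp
  have sq: "qs = take j qs @ q # drop (Suc j) qs" using split_nth[OF assms(7)] q_def by simp
  have dsp: "distinct (take i ps @ p # drop (Suc i) ps)" using dp sp by simp
  have dsq: "distinct (take j qs @ q # drop (Suc j) qs)" using dq sq by simp
  have pA: "p \<notin> set (take i ps)" "p \<notin> set (drop (Suc i) ps)"
    "set (take i ps) \<inter> set (drop (Suc i) ps) = {}" using dsp by auto
  have qA: "q \<notin> set (take j qs)" "q \<notin> set (drop (Suc j) qs)"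
    "set (take j qs) \<inter> set (drop (Suc j) qs) = {}" using dsq by auto
  have subp: "set (take i ps) \<subseteq> set ps" "set (drop (Suc i) ps) \<subseteq> set ps" "p \<in> set ps"
    by (rule set_take_subset, rule set_drop_subset, simp add: p_def assms(6))
  have subq: "set (take j qs) \<subseteq> set qs" "set (drop (Suc j) qs) \<subseteq> set qs" "q \<in> set qs"
    by (rule set_take_subset, rule set_drop_subset, simp add: q_def assms(7))
  have setp: "set ps = set (take i ps) \<union> {p} \<union> set (drop (Suc i) ps)"
    using sp by (metis Un_insert_right insert_is_Un set_append set_simps(2) sup_commute)
  have setq: "set qs = set (take j qs) \<union> {q} \<union> set (drop (Suc j) qs)"
    using sq by (metis Un_insert_right insert_is_Un set_append set_simps(2) sup_commute)
  have pq: "p \<noteq> q" using disj subp(3) subq(3) by blast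
  have pnA: "p \<notin> A" "p \<notin> B" using pA disj subp subq unfolding A_def B_def by blast+
  have qnA: "q \<notin> A" "q \<notin> B" using qA disj subp subq unfolding A_def B_def by blast+
  have AB: "A \<inter> B = {}" using pA(3) qA(3) disj subp subq unfolding A_def B_def by blast
  have V'AB: "V' - {p, q} \<subseteq> A \<union> B" unfolding V'_def A_def B_def using setp setq by blast
  have AV: "A \<subseteq> V'" "B \<subseteq> V'" unfolding A_def B_def V'_def using subp subq by blast+
  have finV: "finite V'" unfolding V'_def by simp
  have HV: "\<forall>e\<in>H. e \<subseteq> V'" unfolding H_def induced_edges_def V'_def using psne qsne by auto
  have tw: "treewidth V' H \<le> 2" using assms(5) unfolding V'_def H_def .
  obtain I F Bg where td: "tree_decomposition V' H I F Bg" and small: "\<forall>t\<in>I. card (Bg t) \<le> 3"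
    using good_td[OF finV HV tw] by blast
  have T: "is_tree I F" using td by (simp add: tree_decomposition_def)
  have BgV: "\<forall>t\<in>I. Bg t \<subseteq> V'" using td by (simp add: tree_decomposition_def)
  have EH: "{x,y} \<in> E \<Longrightarrow> x \<in> V' \<Longrightarrow> y \<in> V' \<Longrightarrow> {x,y} \<in> H" for x y
    unfolding H_def induced_edges_def by simp
  have walkH: "walk H ps" "walk H qs"
  proof -
    show "walk H ps"
    proof (rule walk_mono[OF ipath_walk[OF ip]])
      fix a b assume "a \<in> set ps" "b \<in> set ps" "{a,b} \<in> E"
      then show "{a,b} \<in> H" using EH unfolding V'_def by blast
    qed
    show "walk H qs"
    proof (rule walk_mono[OF ipath_walk[OF iq]])
      fix a b assume "a \<in> set qs" "b \<in> set qs" "{a,b} \<in> E"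
      then show "{a,b} \<in> H" using EH unfolding V'_def by blast
    qed
  qed
  have wtake: "take n xs \<noteq> [] \<Longrightarrow> walk H xs \<Longrightarrow> walk H (take n xs)" for n xs
    using walk_appendD[of H "take n xs" "drop n xs"] by simp
  have wdrop: "drop n xs \<noteq> [] \<Longrightarrow> walk H xs \<Longrightarrow> walk H (drop n xs)" for n xs
    using walk_appendD[of H "take n xs" "drop n xs"] by simp
  have ehd: "{hd ps, hd qs} \<in> H" and elast: "{last ps, last qs} \<in> H" unfolding H_def by simp_all
  show ?thesis
    unfolding separates_def V'_def[symmetric] A_def[symmetric] B_def[symmetric] p_def[symmetric] q_def[symmetric]
  proof (intro conjI notI)
    show "A \<inter> {p, q} = {}" using pnA qnA by blast
    show "B \<inter> {p, q} = {}" using pnA qnA by blast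
    assume "\<exists>xs. walk (induced_edges E V') xs \<and> set xs \<subseteq> V' - {p, q} \<and> hd xs \<in> A \<and> last xs \<in> B"
    then obtain xs where xs: "walk (induced_edges E V') xs" "set xs \<subseteq> V' - {p, q}" "hd xs \<in> A" "last xs \<in> B"
      by blast
    have "set xs \<subseteq> A \<union> B" using xs(2) V'AB by blast
    from walk_cross[OF xs(1) this xs(3,4) AB] obtain a b where ab: "a \<in> A" "b \<in> B" "{a,b} \<in> induced_edges E V'"
      by blast
    have eab: "{a,b} \<in> H" using ab(3) unfolding H_def by simp
    define w3 where "w3 = rev (take i ps) @ take j qs"
    define w4 where "w4 = drop (Suc i) ps @ rev (drop (Suc j) qs)"
    have sw3: "set w3 = A" unfolding w3_def A_def by simp
    have sw4: "set w4 = B" unfolding w4_def B_def by simp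
    have inV: "x \<in> set ps \<Longrightarrow> x \<in> V'" "x \<in> set qs \<Longrightarrow> x \<in> V'" for x unfolding V'_def by simp_all
    have ww3: "walk H w3"
    proof (cases "take i ps = []")
      case True
      have "a \<in> set (take j qs)" using ab(1) unfolding A_def True by simp
      then have "take j qs \<noteq> []" by (metis empty_iff list.set(1))
      then have "walk H (take j qs)" by (rule wtake[OF _ walkH(2)])
      moreover have "w3 = take j qs" unfolding w3_def True by simp
      ultimately show ?thesis by simp
    next
      case False
      then have i0: "i > 0" by (cases i) auto
      have r: "walk H (rev (take i ps))" using wtake[OF False walkH(1)] by (simp add: walk_rev)
      show ?thesis
      proof (cases "take j qs = []")
        case True
        have "w3 = rev (take i ps)" unfolding w3_def True by simp
        then show ?thesis using r by simp
      next
        case False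
        then have j0: "j > 0" by (cases j) auto
        have r2: "walk H (take j qs)" using wtake[OF False walkH(2)] .
        have "last (rev (take i ps)) = hd ps" using i0 psne by (simp add: last_rev)
        moreover have "hd (take j qs) = hd qs" using j0 by simp
        ultimately have "{last (rev (take i ps)), hd (take j qs)} \<in> H" using ehd by simp
        then show ?thesis using r r2 unfolding w3_def walk_append by simp
      qed
    qed
    have ww4: "walk H w4"
    proof (cases "drop (Suc i) ps = []")
      case True
      have "b \<in> set (drop (Suc j) qs)" using ab(2) unfolding B_def True by simp
      then have "drop (Suc j) qs \<noteq> []" by (metis empty_iff list.set(1))
      then have "walk H (drop (Suc j) qs)" by (rule wdrop[OF _ walkH(2)])
      moreover have "w4 = rev (drop (Suc j) qs)" unfolding w4_def True by simp
      ultimately show ?thesis by (simp add: walk_rev)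
    next
      case False
      have r: "walk H (drop (Suc i) ps)" using wdrop[OF False walkH(1)] .
      show ?thesis
      proof (cases "drop (Suc j) qs = []")
        case True
        have "w4 = drop (Suc i) ps" unfolding w4_def True by simp
        then show ?thesis using r by simp
      next
        case False2: False
        have r2: "walk H (rev (drop (Suc j) qs))" using wdrop[OF False2 walkH(2)] by (simp add: walk_rev)
        have "last (drop (Suc i) ps) = last ps" using False by simp
        moreover have "hd (rev (drop (Suc j) qs)) = last qs" using False2 by (simp add: hd_rev)
        ultimately have "{last (drop (Suc i) ps), hd (rev (drop (Suc j) qs))} \<in> H" using elast by simp
        then show ?thesis using r r2 unfolding w4_def walk_append by simp
      qed
    qed
    define Tx where "Tx xs = {t\<in>I. Bg t \<inter> set xs \<noteq> {}}" for xs
    have pV: "p \<in> V'" and qV: "q \<in> V'" using inV subp(3) subq(3) by auto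
    have e12: "{p,q} \<in> H" using EH[OF _ pV qV] assms(8) unfolding p_def q_def by simp
    have m12: "Tx [p] \<inter> Tx [q] \<noteq> {}" unfolding Tx_def by (rule td_meet[OF td e12]) simp_all
    have m34: "Tx w3 \<inter> Tx w4 \<noteq> {}" unfolding Tx_def by (rule td_meet[OF td eab]) (simp_all add: sw3 sw4 ab)
    have m13: "Tx w3 \<inter> Tx [p] \<noteq> {}"
    proof (cases "i > 0")
      case True
      define c where "c = ps ! (i - 1)"
      have si: "Suc (i-1) = i" using True by simp
      have "{ps ! (i-1), ps ! Suc (i-1)} \<in> E" by (rule ipath_edge[OF ip]) (subst si, rule assms(6))
      then have ec: "{c, p} \<in> E" unfolding c_def p_def si .
      have cin: "c \<in> set (take i ps)"
      proof -
        have "take i ps ! (i-1) \<in> set (take i ps)" by (rule nth_mem) (use True assms(6) in simp)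
        then show ?thesis using True assms(6) unfolding c_def by simp
      qed
      have "{c,p} \<in> H" using EH[OF ec _ pV] inV subp(1) cin by blast
      then show ?thesis unfolding Tx_def by (rule td_meet[OF td]) (use cin sw3 A_def in auto)
    next
      case False
      then have i0: "i = 0" by simp
      have "a \<in> set (take j qs)" using ab(1) i0 unfolding A_def by simp
      then have "take j qs \<noteq> []" by (metis empty_iff list.set(1))
      then have j0: "j > 0" by (cases j) auto
      have cin: "hd qs \<in> set (take j qs)"
      proof -
        have "take j qs ! 0 \<in> set (take j qs)" by (rule nth_mem) (use j0 assms(7) in simp)
        then show ?thesis using j0 qsne by (simp add: hd_conv_nth)
      qed
      have "p = hd ps" using i0 psne unfolding p_def by (simp add: hd_conv_nth)
      then have "{p, hd qs} \<in> H" using ehd by simp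
      then have "Tx [p] \<inter> Tx w3 \<noteq> {}" unfolding Tx_def by (rule td_meet[OF td]) (use cin sw3 A_def in auto)
      then show ?thesis by blast
    qed
    have m23: "Tx w3 \<inter> Tx [q] \<noteq> {}"
    proof (cases "j > 0")
      case True
      define c where "c = qs ! (j - 1)"
      have si: "Suc (j-1) = j" using True by simp
      have "{qs ! (j-1), qs ! Suc (j-1)} \<in> E" by (rule ipath_edge[OF iq]) (subst si, rule assms(7))
      then have ec: "{c, q} \<in> E" unfolding c_def q_def si .
      have cin: "c \<in> set (take j qs)"
      proof -
        have "take j qs ! (j-1) \<in> set (take j qs)" by (rule nth_mem) (use True assms(7) in simp)
        then show ?thesis using True assms(7) unfolding c_def by simp
      qed
      have "{c,q} \<in> H" using EH[OF ec _ qV] inV subq(1) cin by blast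
      then show ?thesis unfolding Tx_def by (rule td_meet[OF td]) (use cin sw3 A_def in auto)
    next
      case False
      then have j0: "j = 0" by simp
      then have "a \<in> set (take i ps)" using ab(1) unfolding A_def by simp
      then have "take i ps \<noteq> []" by (metis empty_iff list.set(1))
      then have i0: "i > 0" by (cases i) auto
      have cin: "hd ps \<in> set (take i ps)"
      proof -
        have "take i ps ! 0 \<in> set (take i ps)" by (rule nth_mem) (use i0 assms(6) in simp)
        then show ?thesis using i0 psne by (simp add: hd_conv_nth)
      qed
      have "q = hd qs" using j0 qsne unfolding q_def by (simp add: hd_conv_nth)
      then have "{hd ps, q} \<in> H" using ehd by simp
      then show ?thesis unfolding Tx_def by (rule td_meet[OF td]) (use cin sw3 A_def in auto)
    qed
    have m14: "Tx w4 \<inter> Tx [p] \<noteq> {}"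
    proof (cases "Suc i < length ps")
      case True
      define c where "c = ps ! Suc i"
      have ec: "{p, c} \<in> E" using ipath_edge[OF ip True] unfolding c_def p_def .
      have cin: "c \<in> set (drop (Suc i) ps)"
      proof -
        have "drop (Suc i) ps ! 0 \<in> set (drop (Suc i) ps)" by (rule nth_mem) (use True in simp)
        then show ?thesis using True unfolding c_def by simp
      qed
      have "{p,c} \<in> H" using EH[OF ec pV] inV subp(2) cin by blast
      then have "Tx [p] \<inter> Tx w4 \<noteq> {}" unfolding Tx_def by (rule td_meet[OF td]) (use cin sw4 B_def in auto)
      then show ?thesis by blast
    next
      case False
      then have ieq: "i = length ps - 1" using assms(6) by simp
      have "drop (Suc i) ps = []" using False by simp
      have "b \<in> set (drop (Suc j) qs)" using ab(2) unfolding B_def \<open>drop (Suc i) ps = []\<close> by simp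
      then have jl: "Suc j < length qs" by (metis empty_iff drop_eq_Nil2 linorder_not_le list.set(1))
      have cin: "last qs \<in> set (drop (Suc j) qs)"
      proof -
        have "drop (Suc j) qs \<noteq> []" using jl by simp
        then have "last (drop (Suc j) qs) \<in> set (drop (Suc j) qs)" by (rule last_in_set)
        then show ?thesis using jl by simp
      qed
      have "p = last ps" using ieq psne unfolding p_def by (simp add: last_conv_nth)
      then have "{p, last qs} \<in> H" using elast by simp
      then have "Tx [p] \<inter> Tx w4 \<noteq> {}" unfolding Tx_def by (rule td_meet[OF td]) (use cin sw4 B_def in auto)
      then show ?thesis by blast
    qed
    have m24: "Tx w4 \<inter> Tx [q] \<noteq> {}"
    proof (cases "Suc j < length qs")
      case True
      define c where "c = qs ! Suc j"
      have ec: "{q, c} \<in> E" using ipath_edge[OF iq True] unfolding c_def q_def .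
      have cin: "c \<in> set (drop (Suc j) qs)"
      proof -
        have "drop (Suc j) qs ! 0 \<in> set (drop (Suc j) qs)" by (rule nth_mem) (use True in simp)
        then show ?thesis using True unfolding c_def by simp
      qed
      have "{q,c} \<in> H" using EH[OF ec qV] inV subq(2) cin by blast
      then have "Tx [q] \<inter> Tx w4 \<noteq> {}" unfolding Tx_def by (rule td_meet[OF td]) (use cin sw4 B_def in auto)
      then show ?thesis by blast
    next
      case False
      then have jeq: "j = length qs - 1" using assms(7) by simp
      have "drop (Suc j) qs = []" using False by simp
      have "b \<in> set (drop (Suc i) ps)" using ab(2) unfolding B_def \<open>drop (Suc j) qs = []\<close> by simp
      then have il: "Suc i < length ps" by (metis empty_iff drop_eq_Nil2 linorder_not_le list.set(1))
      have cin: "last ps \<in> set (drop (Suc i) ps)"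
      proof -
        have "drop (Suc i) ps \<noteq> []" using il by simp
        then have "last (drop (Suc i) ps) \<in> set (drop (Suc i) ps)" by (rule last_in_set)
        then show ?thesis using il by simp
      qed
      have "q = last qs" using jeq qsne unfolding q_def by (simp add: last_conv_nth)
      then have "{last ps, q} \<in> H" using elast by simp
      then show ?thesis unfolding Tx_def by (rule td_meet[OF td]) (use cin sw4 B_def in auto)
    qed
    have aV: "a \<in> V'" "b \<in> V'" using ab(1,2) AV by blast+
    have s1: "Tx [p] \<noteq> {}" unfolding Tx_def by (rule td_self[OF td _ pV]) simp
    have s2: "Tx [q] \<noteq> {}" unfolding Tx_def by (rule td_self[OF td _ qV]) simp
    have s3: "Tx w3 \<noteq> {}" unfolding Tx_def by (rule td_self[OF td _ aV(1)]) (simp add: sw3 ab)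
    have s4: "Tx w4 \<noteq> {}" unfolding Tx_def by (rule td_self[OF td _ aV(2)]) (simp add: sw4 ab)
    have c1: "conn F (Tx [p])" unfolding Tx_def by (rule td_conn[OF td]) (simp_all add: pV)
    have c2: "conn F (Tx [q])" unfolding Tx_def by (rule td_conn[OF td]) (simp_all add: qV)
    have c3: "conn F (Tx w3)" unfolding Tx_def by (rule td_conn[OF td ww3]) (simp add: sw3 AV)
    have c4: "conn F (Tx w4)" unfolding Tx_def by (rule td_conn[OF td ww4]) (simp add: sw4 AV)
    have sI: "Tx xs \<subseteq> I" for xs unfolding Tx_def by blast
    define SS where "SS = {Tx [p], Tx [q], Tx w3, Tx w4}"
    have h2: "\<forall>S\<in>SS. S \<subseteq> I \<and> conn F S" unfolding SS_def using sI c1 c2 c3 c4 by blast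
    have m21: "Tx [q] \<inter> Tx [p] \<noteq> {}" using m12 by blast
    have m31: "Tx [p] \<inter> Tx w3 \<noteq> {}" using m13 by blast
    have m32: "Tx [q] \<inter> Tx w3 \<noteq> {}" using m23 by blast
    have m41: "Tx [p] \<inter> Tx w4 \<noteq> {}" using m14 by blast
    have m42: "Tx [q] \<inter> Tx w4 \<noteq> {}" using m24 by blast
    have m43: "Tx w4 \<inter> Tx w3 \<noteq> {}" using m34 by blast
    have h3: "\<forall>S\<in>SS. \<forall>T\<in>SS. S \<inter> T \<noteq> {}" unfolding SS_def
      using s1 s2 s3 s4 m12 m21 m13 m31 m23 m32 m14 m41 m24 m42 m34 m43 by simp
    obtain t where t: "t \<in> I" "\<forall>S\<in>SS. t \<in> S" using helly[OF T h2 h3] by blast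
    have "t \<in> Tx [p]" "t \<in> Tx [q]" "t \<in> Tx w3" "t \<in> Tx w4" using t(2) unfolding SS_def by simp_all
    then have "p \<in> Bg t" "q \<in> Bg t" "Bg t \<inter> A \<noteq> {}" "Bg t \<inter> B \<noteq> {}"
      unfolding Tx_def using sw3 sw4 by auto
    then obtain c3 c4 where c34: "c3 \<in> A" "c3 \<in> Bg t" "c4 \<in> B" "c4 \<in> Bg t" "p \<in> Bg t" "q \<in> Bg t" by blast
    have d: "p \<noteq> c3" "p \<noteq> c4" "q \<noteq> c3" "q \<noteq> c4" "c3 \<noteq> c4"
      using c34 pnA qnA AB by blast+
    have sub4: "{p, q, c3, c4} \<subseteq> Bg t" using c34 by blast
    have finB: "finite (Bg t)" using BgV t(1) finV by (meson finite_subset)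
    have "card {p, q, c3, c4} = 4" using d pq by simp
    moreover have "card {p, q, c3, c4} \<le> card (Bg t)" by (rule card_mono[OF finB sub4])
    moreover have "card (Bg t) \<le> 3" using small t(1) by blast
    ultimately show False by simp
  qed
qed

end
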